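(* If $\mathcal{P}$ and $\mathcal{Q}$ are locally finite posets, then $J_\mathcal{P}\times J_\mathcal{Q}=J_{\mathcal{P}\times\mathcal{Q}}$, i.e. for all $(x_1,y_1,z_1)\in\mathcal{F}l^3(\mathcal{P})$ and $(x_2,y_2,z_2)\in\mathcal{F}l^3(\mathcal{Q})$, $$J_{\mathcal{P}\times\mathcal{Q}}\big((x_1,x_2),(y_1,y_2),(z_1,z_2)\big)=J_\mathcal{P}(x_1,y_1,z_1)\,J_\mathcal{Q}(x_2,y_2,z_2).$$
   Context: $\mathcal{P}\times\mathcal{Q}$ has the product order. For a locally finite poset $\mathcal{R}$, $\mathcal{F}l^3(\mathcal{R})=\{(x,y,z)\in\mathcal{R}^3:x\le y\le z\}$, $\delta_3(x,y,z)=1$ if $x=y=z$ and $0$ otherwise, and $J_\mathcal{R}:\mathcal{F}l^3(\mathcal{R})\to\mathbb{Z}$ is the unique function with $\sum_{x\le a\le y\le b\le z}J_\mathcal{R}(a,y,b)=\delta_3(x,y,z)$ for all $(x,y,z)\in\mathcal{F}l^3(\mathcal{R})$ (sum over $a,b\in\mathcal{R}$). *)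

theory Defs
  imports Main "HOL-Library.Product_Order"
begin

text \<open>A poset is modelled as a type of class order; the product poset is the
  product type with the componentwise order from HOL-Library.Product_Order.\<close>

definition locally_finite :: "'a::order itself \<Rightarrow> bool" where
  "locally_finite _ \<longleftrightarrow> (\<forall>x y :: 'a. finite {x..y})"

definition Fl3 :: "('a::order \<times> 'a \<times> 'a) set" where
  "Fl3 = {(x, y, z). x \<le> y \<and> y \<le> z}"

definition delta3 :: "'a \<Rightarrow> 'a \<Rightarrow> 'a \<Rightarrow> int" where
  "delta3 x y z = (if x = y \<and> y = z then 1 else 0)"

definition J :: "'a::order \<Rightarrow> 'a \<Rightarrow> 'a \<Rightarrow> int" where
  "J = (THE f. (\<forall>a y b. (a, y, b) \<notin> Fl3 \<longrightarrow> f a y b = 0) \<and>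
              (\<forall>x y z. (x, y, z) \<in> Fl3 \<longrightarrow>
                 (\<Sum>a\<in>{x..y}. \<Sum>b\<in>{y..z}. f a y b) = delta3 x y z))"

end

theory Submission
  imports Defs
begin

fun muRf :: "nat \<Rightarrow> 'a::order \<Rightarrow> 'a \<Rightarrow> int" where
  "muRf 0 y z = 0"
| "muRf (Suc n) y z = (if y = z then 1 else if y \<le> z then - (\<Sum>b\<in>{y..<z}. muRf n y b) else 0)"

fun muLf :: "nat \<Rightarrow> 'a::order \<Rightarrow> 'a \<Rightarrow> int" where
  "muLf 0 x y = 0"
| "muLf (Suc n) x y = (if x = y then 1 else if x \<le> y then - (\<Sum>a\<in>{x<..y}. muLf n a y) else 0)"

lemma card_Icc_pos:
  assumes "finite {x..y::'a::order}" "x \<le> y" shows "0 < card {x..y}"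
  using assms by (metis atLeastAtMost_iff card_gt_0_iff empty_iff order_refl)

lemma muRf_stable:
  assumes lf: "\<And>x y::'a::order. finite {x..y}"
  shows "card {y..z} \<le> n \<Longrightarrow> card {y..z} \<le> m \<Longrightarrow> muRf n y (z::'a) = muRf m y z"
proof (induction n arbitrary: m z)
  case 0
  show ?case
  proof (cases "y \<le> z")
    case True
    then show ?thesis using card_Icc_pos[OF lf True] 0 by simp
  next
    case False
    then show ?thesis by (cases m) auto
  qed
next
  case (Suc n)
  show ?case
  proof (cases "y \<le> z")
    case False
    then show ?thesis by (cases m) auto
  next
    case True
    then obtain m' where m: "m = Suc m'" using card_Icc_pos[OF lf True] Suc.prems
      by (cases m) auto
    have "muRf n y b = muRf m' y b" if b: "b \<in> {y..<z}" for b
    proof -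
      have "{y..b} \<subset> {y..z}" using b by auto
      then have "card {y..b} < card {y..z}" using lf by (simp add: psubset_card_mono)
      then show ?thesis using Suc m by (intro Suc.IH) auto
    qed
    then show ?thesis using m by simp
  qed
qed

lemma muLf_stable:
  assumes lf: "\<And>x y::'a::order. finite {x..y}"
  shows "card {x..y} \<le> n \<Longrightarrow> card {x..y} \<le> m \<Longrightarrow> muLf n (x::'a) y = muLf m x y"
proof (induction n arbitrary: m x)
  case 0
  show ?case
  proof (cases "x \<le> y")
    case True
    then show ?thesis using card_Icc_pos[OF lf True] 0 by simp
  next
    case False
    then show ?thesis by (cases m) auto
  qed
next
  case (Suc n)
  show ?case
  proof (cases "x \<le> y")
    case False
    then show ?thesis by (cases m) auto
  next
    case True
    then obtain m' where m: "m = Suc m'" using card_Icc_pos[OF lf True] Suc.prems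
      by (cases m) auto
    have "muLf n a y = muLf m' a y" if b: "a \<in> {x<..y}" for a
    proof -
      have "{a..y} \<subset> {x..y}" using b by auto
      then have "card {a..y} < card {x..y}" using lf by (simp add: psubset_card_mono)
      then show ?thesis using Suc m by (intro Suc.IH) auto
    qed
    then show ?thesis using m by simp
  qed
qed

definition muR :: "'a::order \<Rightarrow> 'a \<Rightarrow> int" where
  "muR y z = muRf (card {y..z}) y z"
definition muL :: "'a::order \<Rightarrow> 'a \<Rightarrow> int" where
  "muL x y = muLf (card {x..y}) x y"

lemma muR_sum:
  assumes lf: "\<And>x y::'a::order. finite {x..y}" and yz: "y \<le> (z::'a)"
  shows "(\<Sum>b\<in>{y..z}. muR y b) = (if y = z then 1 else 0)"
proof -
  obtain k where k: "card {y..z} = Suc k" using card_Icc_pos[OF lf yz] by (cases "card {y..z}") auto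
  have eq: "muR y b = muRf k y b" if b: "b \<in> {y..<z}" for b
  proof -
    have "{y..b} \<subset> {y..z}" using b by auto
    then have "card {y..b} < card {y..z}" using lf by (simp add: psubset_card_mono)
    then show ?thesis unfolding muR_def using k by (intro muRf_stable[OF lf]) auto
  qed
  have split: "{y..z} = insert z {y..<z}" using yz by auto
  have "(\<Sum>b\<in>{y..z}. muR y b) = muR y z + (\<Sum>b\<in>{y..<z}. muR y b)"
    unfolding split using lf[of y z] split by (subst sum.insert) auto
  also have "(\<Sum>b\<in>{y..<z}. muR y b) = (\<Sum>b\<in>{y..<z}. muRf k y b)"
    using eq by (rule sum.cong[OF refl])
  finally show ?thesis using yz unfolding muR_def k by auto
qed

lemma muL_sum:
  assumes lf: "\<And>x y::'a::order. finite {x..y}" and xy: "x \<le> (y::'a)"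
  shows "(\<Sum>a\<in>{x..y}. muL a y) = (if x = y then 1 else 0)"
proof -
  obtain k where k: "card {x..y} = Suc k" using card_Icc_pos[OF lf xy] by (cases "card {x..y}") auto
  have eq: "muL a y = muLf k a y" if b: "a \<in> {x<..y}" for a
  proof -
    have "{a..y} \<subset> {x..y}" using b by auto
    then have "card {a..y} < card {x..y}" using lf by (simp add: psubset_card_mono)
    then show ?thesis unfolding muL_def using k by (intro muLf_stable[OF lf]) auto
  qed
  have split: "{x..y} = insert x {x<..y}" using xy by auto
  have fin: "finite {x<..y}" using lf[of x y] by (rule finite_subset[rotated]) auto
  have "(\<Sum>a\<in>{x..y}. muL a y) = muL x y + (\<Sum>a\<in>{x<..y}. muL a y)"
    unfolding split using fin by (subst sum.insert) auto
  also have "(\<Sum>a\<in>{x<..y}. muL a y) = (\<Sum>a\<in>{x<..y}. muLf k a y)"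
    using eq by (rule sum.cong[OF refl])
  finally show ?thesis using xy unfolding muL_def k by auto
qed

definition Jprop :: "('a::order \<Rightarrow> 'a \<Rightarrow> 'a \<Rightarrow> int) \<Rightarrow> bool" where
  "Jprop f \<longleftrightarrow> (\<forall>a y b. (a, y, b) \<notin> Fl3 \<longrightarrow> f a y b = 0) \<and>
              (\<forall>x y z. (x, y, z) \<in> Fl3 \<longrightarrow>
                 (\<Sum>a\<in>{x..y}. \<Sum>b\<in>{y..z}. f a y b) = delta3 x y z)"

lemma J_exists:
  assumes lf: "\<And>x y::'a::order. finite {x..y}"
  shows "Jprop (\<lambda>a y b::'a. if (a, y, b) \<in> Fl3 then muL a y * muR y b else 0)"
  unfolding Jprop_def
proof (intro conjI allI impI)
  fix a y b :: 'a assume "(a, y, b) \<notin> Fl3" then show "(if (a, y, b) \<in> Fl3 then muL a y * muR y b else 0) = 0" by simp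
next
  fix x y z :: 'a assume "(x, y, z) \<in> Fl3"
  then have xy: "x \<le> y" and yz: "y \<le> z" by (auto simp: Fl3_def)
  have "(\<Sum>a\<in>{x..y}. \<Sum>b\<in>{y..z}. if (a, y, b) \<in> Fl3 then muL a y * muR y b else 0)
      = (\<Sum>a\<in>{x..y}. \<Sum>b\<in>{y..z}. muL a y * muR y b)"
    by (intro sum.cong refl) (auto simp: Fl3_def)
  also have "\<dots> = (\<Sum>a\<in>{x..y}. muL a y) * (\<Sum>b\<in>{y..z}. muR y b)"
    by (simp add: sum_product)
  also have "\<dots> = delta3 x y z"
    using muL_sum[OF lf xy] muR_sum[OF lf yz] by (simp add: delta3_def)
  finally show "(\<Sum>a\<in>{x..y}. \<Sum>b\<in>{y..z}. if (a, y, b) \<in> Fl3 then muL a y * muR y b else 0) = delta3 x y z" .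
qed

lemma J_unique:
  assumes lf: "\<And>x y::'a::order. finite {x..y}"
    and f: "Jprop (f :: 'a \<Rightarrow> 'a \<Rightarrow> 'a \<Rightarrow> int)" and g: "Jprop g"
  shows "f = g"
proof -
  have main: "\<forall>x y z. card {x..y} + card {y..z} = n \<longrightarrow> (x, y, z) \<in> Fl3 \<longrightarrow> f x y z = g x y z" for n
  proof (induction n rule: less_induct)
    case (less n)
    show ?case
    proof (intro allI impI)
      fix x y z :: 'a
      assume n: "card {x..y} + card {y..z} = n" and F: "(x, y, z) \<in> Fl3"
      then have xy: "x \<le> y" and yz: "y \<le> z" by (auto simp: Fl3_def)
      let ?S = "{x..y} \<times> {y..z}"
      have finS: "finite ?S" using lf by auto
      have inS: "(x, z) \<in> ?S" using xy yz by auto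
      have rest: "f a y b = g a y b" if ab: "(a, b) \<in> ?S - {(x, z)}" for a b
      proof -
        have s1: "{a..y} \<subseteq> {x..y}" "{y..b} \<subseteq> {y..z}" using ab by auto
        have c1: "card {a..y} \<le> card {x..y}" "card {y..b} \<le> card {y..z}"
          using card_mono[OF lf s1(1)] card_mono[OF lf s1(2)] by auto
        have "a \<noteq> x \<or> b \<noteq> z" using ab by auto
        then have "card {a..y} < card {x..y} \<or> card {y..b} < card {y..z}"
        proof
          assume "a \<noteq> x"
          then have "x \<notin> {a..y}" using ab by auto
          then have "{a..y} \<subset> {x..y}" using s1 xy by auto
          then show ?thesis using lf by (simp add: psubset_card_mono)
        next
          assume "b \<noteq> z"
          then have "z \<notin> {y..b}" using ab by auto
          then have "{y..b} \<subset> {y..z}" using s1 yz by auto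
          then show ?thesis using lf by (simp add: psubset_card_mono)
        qed
        then have "card {a..y} + card {y..b} < n" using c1 n by linarith
        moreover have "(a, y, b) \<in> Fl3" using ab by (auto simp: Fl3_def)
        ultimately show ?thesis using less.IH by blast
      qed
      have "delta3 x y z = (\<Sum>(a,b)\<in>?S. f a y b)"
        using f F unfolding Jprop_def by (simp add: sum.cartesian_product)
      also have "\<dots> = f x y z + (\<Sum>(a,b)\<in>?S - {(x,z)}. f a y b)"
        using sum.remove[OF finS inS, of "\<lambda>(a,b). f a y b"] by simp
      also have "(\<Sum>(a,b)\<in>?S - {(x,z)}. f a y b) = (\<Sum>(a,b)\<in>?S - {(x,z)}. g a y b)"
      proof (rule sum.cong[OF refl])
        fix p assume p: "p \<in> ?S - {(x,z)}"
        obtain a b where ab: "p = (a, b)" by (cases p)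
        show "(case p of (a, b) \<Rightarrow> f a y b) = (case p of (a, b) \<Rightarrow> g a y b)"
          using rest[of a b] p unfolding ab by simp
      qed
      finally have 1: "delta3 x y z = f x y z + (\<Sum>(a,b)\<in>?S - {(x,z)}. g a y b)" .
      have "delta3 x y z = (\<Sum>(a,b)\<in>?S. g a y b)"
        using g F unfolding Jprop_def by (simp add: sum.cartesian_product)
      also have "\<dots> = g x y z + (\<Sum>(a,b)\<in>?S - {(x,z)}. g a y b)"
        using sum.remove[OF finS inS, of "\<lambda>(a,b). g a y b"] by simp
      finally show "f x y z = g x y z" using 1 by simp
    qed
  qed
  show ?thesis
  proof (intro ext)
    fix x y z
    show "f x y z = g x y z"
    proof (cases "(x, y, z) \<in> Fl3")
      case True then show ?thesis using main by blast
    next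
      case False then show ?thesis using f g unfolding Jprop_def by simp
    qed
  qed
qed

lemma J_prop:
  assumes lf: "\<And>x y::'a::order. finite {x..y}"
  shows "Jprop (J :: 'a \<Rightarrow> 'a \<Rightarrow> 'a \<Rightarrow> int)"
proof -
  have ex: "\<exists>!f. Jprop (f :: 'a \<Rightarrow> 'a \<Rightarrow> 'a \<Rightarrow> int)"
    using J_exists[OF lf] J_unique[OF lf] by blast
  have "J = (THE f. Jprop (f :: 'a \<Rightarrow> 'a \<Rightarrow> 'a \<Rightarrow> int))"
    unfolding J_def Jprop_def ..
  then show ?thesis using theI'[OF ex] by simp
qed

lemma sum_times_split: "sum f (A \<times> B) = (\<Sum>a\<in>A. \<Sum>b\<in>B. f (a, b))"
  by (simp add: sum.cartesian_product)

lemma fun_cong3: "f = g \<Longrightarrow> f a b c = g a b c" by simp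

lemma Icc_prod: "{(x1, x2)..(y1, y2)} = {x1..y1} \<times> {x2..y2}"
  by (auto simp: less_eq_prod_def)

lemma Icc_prod': "{x..y} = {fst x..fst y} \<times> {snd x..snd y}"
  using Icc_prod[of "fst x" "snd x" "fst y" "snd y"] by simp

theorem proposition5p5:
  fixes x1 y1 z1 :: "'p::order" and x2 y2 z2 :: "'q::order"
  assumes "locally_finite TYPE('p)" and "locally_finite TYPE('q)"
    and "(x1, y1, z1) \<in> Fl3" and "(x2, y2, z2) \<in> Fl3"
  shows "J (x1, x2) (y1, y2) (z1, z2) = J x1 y1 z1 * J x2 y2 z2"
proof -
  have lf1: "\<And>x y::'p. finite {x..y}" using assms(1) unfolding locally_finite_def by blast
  have lf2: "\<And>x y::'q. finite {x..y}" using assms(2) unfolding locally_finite_def by blast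
  have lf: "\<And>x y::'p \<times> 'q. finite {x..y}" using lf1 lf2 by (simp add: Icc_prod')
  have P1: "Jprop (J :: 'p \<Rightarrow> _)" by (rule J_prop[OF lf1])
  have P2: "Jprop (J :: 'q \<Rightarrow> _)" by (rule J_prop[OF lf2])
  define g :: "'p \<times> 'q \<Rightarrow> 'p \<times> 'q \<Rightarrow> 'p \<times> 'q \<Rightarrow> int" where
    "g = (\<lambda>a y b. J (fst a) (fst y) (fst b) * J (snd a) (snd y) (snd b))"
  have Fl3_prod: "((a, y, b) \<in> Fl3) \<longleftrightarrow> ((fst a, fst y, fst b) \<in> Fl3 \<and> (snd a, snd y, snd b) \<in> Fl3)"
    for a y b :: "'p \<times> 'q"
    by (auto simp: Fl3_def less_eq_prod_def)
  have "Jprop g"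
    unfolding Jprop_def
  proof (intro conjI allI impI)
    fix a y b :: "'p \<times> 'q" assume "(a, y, b) \<notin> Fl3"
    then show "g a y b = 0" using P1 P2 unfolding Jprop_def g_def Fl3_prod by auto
  next
    fix x y z :: "'p \<times> 'q" assume "(x, y, z) \<in> Fl3"
    then have F1: "(fst x, fst y, fst z) \<in> Fl3" and F2: "(snd x, snd y, snd z) \<in> Fl3"
      using Fl3_prod by auto
    have "(\<Sum>a\<in>{x..y}. \<Sum>b\<in>{y..z}. g a y b)
       = (\<Sum>a1\<in>{fst x..fst y}. \<Sum>a2\<in>{snd x..snd y}. \<Sum>b1\<in>{fst y..fst z}. \<Sum>b2\<in>{snd y..snd z}.
           J a1 (fst y) b1 * J a2 (snd y) b2)"
      unfolding Icc_prod'[of x y] Icc_prod'[of y z] g_def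
      by (simp add: sum_times_split)
    also have "\<dots> = (\<Sum>a1\<in>{fst x..fst y}. \<Sum>b1\<in>{fst y..fst z}. \<Sum>a2\<in>{snd x..snd y}. \<Sum>b2\<in>{snd y..snd z}.
           J a1 (fst y) b1 * J a2 (snd y) b2)"
      by (intro sum.cong refl sum.swap)
    also have "\<dots> = (\<Sum>a1\<in>{fst x..fst y}. \<Sum>b1\<in>{fst y..fst z}. J a1 (fst y) b1)
                  * (\<Sum>a2\<in>{snd x..snd y}. \<Sum>b2\<in>{snd y..snd z}. J a2 (snd y) b2)"
      unfolding sum_distrib_right unfolding sum_distrib_left by (rule refl)
    also have "\<dots> = delta3 (fst x) (fst y) (fst z) * delta3 (snd x) (snd y) (snd z)"
      using P1 P2 F1 F2 unfolding Jprop_def by simp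
    also have "\<dots> = delta3 x y z"
      by (auto simp: delta3_def prod_eq_iff)
    finally show "(\<Sum>a\<in>{x..y}. \<Sum>b\<in>{y..z}. g a y b) = delta3 x y z" .
  qed
  then have "J = g" using J_prop[OF lf] J_unique[OF lf] by blast
  then have "J (x1, x2) (y1, y2) (z1, z2) = g (x1, x2) (y1, y2) (z1, z2)" by (rule fun_cong3)
  then show ?thesis by (simp add: g_def)
qed

end
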